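(* For any sheaf $\mathcal F$ of finite-dimensional $\mathbb F$-vector spaces on a digraph $G$, $h_1^{\rm twist}(\mathcal F)\ge{\rm m.e.}(\mathcal F)$.
   Context: A digraph has finite vertex and edge sets with tail/head maps $t_G,h_G$. A sheaf $\mathcal F$ on $G$: finite-dimensional vector spaces $\mathcal F(P)$, $P\in V_G\sqcup E_G$, linear maps $\mathcal F(t,e)\colon\mathcal F(e)\to\mathcal F(t_Ge)$, $\mathcal F(h,e)\colon\mathcal F(e)\to\mathcal F(h_Ge)$; $\mathcal F(V)=\bigoplus_v\mathcal F(v)$, $\mathcal F(E)=\bigoplus_e\mathcal F(e)$; $d_h,d_t\colon\mathcal F(E)\to\mathcal F(V)$ send the summand $\mathcal F(e)$ into $\mathcal F(h_Ge)$ resp. $\mathcal F(t_Ge)$ via the restriction maps, $d=d_h-d_t$, $H_1=\ker d$. Twisting: with independent indeterminates $\psi(e)$, $e\in E_G$, $\mathcal F^\psi$ is the sheaf of $\mathbb F(\psi)$-vector spaces with values $\mathcal F(P)\otimes_{\mathbb F}\mathbb F(\psi)$, head maps $\mathcal F(h,e)$, tail maps $\psi(e)\mathcal F(t,e)$; $h_1^{\rm twist}(\mathcal F)=\dim_{\mathbb F(\psi)}H_1(\mathcal F^\psi)$. For $U\subset\mathcal F(V)$, $\Gamma_{\rm ht}(U)=\bigoplus_e\{w\in\mathcal F(e):d_hw\in U,d_tw\in U\}$, ${\rm excess}(\mathcal F,U)=\dim\Gamma_{\rm ht}(U)-\dim U$, ${\rm m.e.}(\mathcal F)=\max_U{\rm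 excess}(\mathcal F,U)$. *)

theory Defs
  imports Main "HOL.Vector_Spaces" "HOL-Library.Poly_Mapping" "HOL-Library.Function_Algebras"
    "HOL-Computational_Algebra.Fraction_Field"
begin

text \<open>Coordinates: a sheaf of finite-dimensional vector spaces over a field 'a on a digraph
  (V, E, tailG, headG) is given by dimensions nV v = dim F(v), nE e = dim F(e), and the restriction
  maps as coefficient arrays: RH e i j is the (i,j) entry of F(h,e) : 'a^(nE e) -> 'a^(nV (headG e))
  and RT e i j is the (i,j) entry of F(t,e) : 'a^(nE e) -> 'a^(nV (tailG e)).
  F(V) is realised as functions on pairs (v,i), v in V, i < nV v (zero elsewhere);
  F(E) likewise on pairs (e,j). Everything is generic in the scalar ring 'k so that the
  same definitions serve for 'a and for the rational function field 'a(psi).\<close>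

definition fscale :: "'k::times \<Rightarrow> ('x \<Rightarrow> 'k) \<Rightarrow> ('x \<Rightarrow> 'k)" where
  "fscale c f = (\<lambda>x. c * f x)"

definition FV :: "'v set \<Rightarrow> ('v \<Rightarrow> nat) \<Rightarrow> ('v \<times> nat \<Rightarrow> 'k::zero) set" where
  "FV V nV = {x. \<forall>v i. \<not> (v \<in> V \<and> i < nV v) \<longrightarrow> x (v, i) = 0}"

definition FE :: "'e set \<Rightarrow> ('e \<Rightarrow> nat) \<Rightarrow> ('e \<times> nat \<Rightarrow> 'k::zero) set" where
  "FE E nE = {w. \<forall>e j. \<not> (e \<in> E \<and> j < nE e) \<longrightarrow> w (e, j) = 0}"

text \<open>The map F(E) -> F(V) sending summand F(e) into F(end e) via coefficients R
  (used for d_h with end = headG, and for d_t with end = tailG).\<close>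
definition dmap :: "'e set \<Rightarrow> ('e \<Rightarrow> 'v) \<Rightarrow> ('v \<Rightarrow> nat) \<Rightarrow> ('e \<Rightarrow> nat)
    \<Rightarrow> ('e \<Rightarrow> nat \<Rightarrow> nat \<Rightarrow> 'k::comm_ring) \<Rightarrow> ('e \<times> nat \<Rightarrow> 'k) \<Rightarrow> ('v \<times> nat \<Rightarrow> 'k)" where
  "dmap E endp nV nE R w = (\<lambda>(v, i). if i < nV v then
      (\<Sum>e\<in>{e\<in>E. endp e = v}. \<Sum>j<nE e. R e i j * w (e, j)) else 0)"

definition ecomp :: "'e \<Rightarrow> ('e \<times> nat \<Rightarrow> 'k::zero) \<Rightarrow> ('e \<times> nat \<Rightarrow> 'k)" where
  "ecomp e w = (\<lambda>(e', j). if e' = e then w (e', j) else 0)"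

definition H1 :: "'v set \<Rightarrow> 'e set \<Rightarrow> ('e \<Rightarrow> 'v) \<Rightarrow> ('e \<Rightarrow> 'v) \<Rightarrow> ('v \<Rightarrow> nat) \<Rightarrow> ('e \<Rightarrow> nat)
    \<Rightarrow> ('e \<Rightarrow> nat \<Rightarrow> nat \<Rightarrow> 'k::comm_ring) \<Rightarrow> ('e \<Rightarrow> nat \<Rightarrow> nat \<Rightarrow> 'k)
    \<Rightarrow> ('e \<times> nat \<Rightarrow> 'k) set" where
  "H1 V E tailG headG nV nE RT RH =
     {w \<in> FE E nE. dmap E headG nV nE RH w - dmap E tailG nV nE RT w = 0}"

text \<open>Polynomial ring 'a[psi(e) : e] and its fraction field 'a(psi).\<close>
type_synonym ('e, 'a) psi_field = "(('e \<Rightarrow>\<^sub>0 nat) \<Rightarrow>\<^sub>0 'a) fract"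

definition const_psi :: "'a::field \<Rightarrow> ('e::linorder, 'a) psi_field" where
  "const_psi c = Fract (Poly_Mapping.single 0 c) 1"

definition psi :: "'e::linorder \<Rightarrow> ('e, 'a::field) psi_field" where
  "psi e = Fract (Poly_Mapping.single (Poly_Mapping.single e 1) 1) 1"

text \<open>Twisted sheaf: head maps F(h,e), tail maps psi(e) F(t,e), tensored up to 'a(psi).\<close>
definition h1_twist :: "'v set \<Rightarrow> 'e::linorder set \<Rightarrow> ('e \<Rightarrow> 'v) \<Rightarrow> ('e \<Rightarrow> 'v) \<Rightarrow> ('v \<Rightarrow> nat)
    \<Rightarrow> ('e \<Rightarrow> nat) \<Rightarrow> ('e \<Rightarrow> nat \<Rightarrow> nat \<Rightarrow> 'a::field) \<Rightarrow> ('e \<Rightarrow> nat \<Rightarrow> nat \<Rightarrow> 'a) \<Rightarrow> nat" where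
  "h1_twist V E tailG headG nV nE RT RH =
     vector_space.dim (fscale :: ('e, 'a) psi_field \<Rightarrow> _)
       (H1 V E tailG headG nV nE (\<lambda>e i j. psi e * const_psi (RT e i j)) (\<lambda>e i j. const_psi (RH e i j)))"

definition Gamma_ht :: "'v set \<Rightarrow> 'e set \<Rightarrow> ('e \<Rightarrow> 'v) \<Rightarrow> ('e \<Rightarrow> 'v) \<Rightarrow> ('v \<Rightarrow> nat) \<Rightarrow> ('e \<Rightarrow> nat)
    \<Rightarrow> ('e \<Rightarrow> nat \<Rightarrow> nat \<Rightarrow> 'a::field) \<Rightarrow> ('e \<Rightarrow> nat \<Rightarrow> nat \<Rightarrow> 'a)
    \<Rightarrow> ('v \<times> nat \<Rightarrow> 'a) set \<Rightarrow> ('e \<times> nat \<Rightarrow> 'a) set" where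
  "Gamma_ht V E tailG headG nV nE RT RH U =
     {w \<in> FE E nE. \<forall>e\<in>E. dmap E headG nV nE RH (ecomp e w) \<in> U \<and> dmap E tailG nV nE RT (ecomp e w) \<in> U}"

definition excess :: "'v set \<Rightarrow> 'e set \<Rightarrow> ('e \<Rightarrow> 'v) \<Rightarrow> ('e \<Rightarrow> 'v) \<Rightarrow> ('v \<Rightarrow> nat) \<Rightarrow> ('e \<Rightarrow> nat)
    \<Rightarrow> ('e \<Rightarrow> nat \<Rightarrow> nat \<Rightarrow> 'a::field) \<Rightarrow> ('e \<Rightarrow> nat \<Rightarrow> nat \<Rightarrow> 'a)
    \<Rightarrow> ('v \<times> nat \<Rightarrow> 'a) set \<Rightarrow> int" where
  "excess V E tailG headG nV nE RT RH U =
     int (vector_space.dim (fscale :: 'a \<Rightarrow> _) (Gamma_ht V E tailG headG nV nE RT RH U))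
     - int (vector_space.dim (fscale :: 'a \<Rightarrow> _) U)"

definition max_excess :: "'v set \<Rightarrow> 'e set \<Rightarrow> ('e \<Rightarrow> 'v) \<Rightarrow> ('e \<Rightarrow> 'v) \<Rightarrow> ('v \<Rightarrow> nat) \<Rightarrow> ('e \<Rightarrow> nat)
    \<Rightarrow> ('e \<Rightarrow> nat \<Rightarrow> nat \<Rightarrow> 'a::field) \<Rightarrow> ('e \<Rightarrow> nat \<Rightarrow> nat \<Rightarrow> 'a) \<Rightarrow> int" where
  "max_excess V E tailG headG nV nE RT RH =
     Max {excess V E tailG headG nV nE RT RH U | U.
            module.subspace (fscale :: 'a \<Rightarrow> _) U \<and> U \<subseteq> FV V nV}"

end

theory Submission imports Defs begin

lemma sum_fun_apply: "(sum f A) x = (\<Sum>a\<in>A. f a x)"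
  by (induct A rule: infinite_finite_induct) auto

lemma minus_fun_apply': "(f - g) x = f x - (g :: _ \<Rightarrow> 'b::ab_group_add) x"
  by simp

lemma vs_fscale: "vector_space (fscale :: 'k::field \<Rightarrow> ('x \<Rightarrow> 'k) \<Rightarrow> _)"
  by unfold_locales (auto simp: fscale_def fun_eq_iff algebra_simps)

lemma fscale_apply[simp]: "fscale c f x = c * f x"
  by (simp add: fscale_def)

lemma const_psi_add: "const_psi (a + b) = (const_psi a + const_psi b :: ('e::linorder,'a::field) psi_field)"
  by (simp add: const_psi_def single_add)

lemma const_psi_mult: "const_psi (a * b) = (const_psi a * const_psi b :: ('e::linorder,'a::field) psi_field)"
  by (simp add: const_psi_def mult_single)

lemma const_psi_0[simp]: "const_psi 0 = (0 :: ('e::linorder,'a::field) psi_field)"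
  by (simp add: const_psi_def Zero_fract_def)

lemma const_psi_1[simp]: "const_psi 1 = (1 :: ('e::linorder,'a::field) psi_field)"
  by (simp add: const_psi_def One_fract_def)

lemma const_psi_eq0[simp]: "(const_psi a = (0 :: ('e::linorder,'a::field) psi_field)) \<longleftrightarrow> a = 0"
  by (simp add: const_psi_def Zero_fract_def eq_fract) (metis inj_single injD single_zero)

lemma const_psi_sum: "const_psi (sum f A) = (\<Sum>x\<in>A. const_psi (f x) :: ('e::linorder,'a::field) psi_field)"
  by (induct A rule: infinite_finite_induct) (auto simp: const_psi_add)

lemma const_psi_diff: "const_psi (a - b) = (const_psi a - const_psi b :: ('e::linorder,'a::field) psi_field)"
  by (metis add_diff_cancel const_psi_add diff_add_cancel)

lemma const_psi_inj: "(const_psi a = (const_psi b :: ('e::linorder,'a::field) psi_field)) \<longleftrightarrow> a = b"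
  by (metis const_psi_diff const_psi_eq0 eq_iff_diff_eq_0)

lemma vs_cscale: "vector_space (\<lambda>r (k::('e::linorder,'a::field) psi_field). const_psi r * k)"
  by unfold_locales (auto simp: algebra_simps const_psi_add const_psi_mult)

lemma vs_mult: "vector_space ((*) :: 'a::field \<Rightarrow> 'a \<Rightarrow> 'a)"
  by unfold_locales (auto simp: algebra_simps)

lemma cv_inj: "inj (\<lambda>(w::'x \<Rightarrow> 'a::field) x. (const_psi (w x) :: ('e::linorder,'a) psi_field))"
  by (rule injI) (simp add: fun_eq_iff const_psi_inj)

lemma indep_cv:
  fixes B :: "('x \<Rightarrow> 'a::field) set"
  assumes indep: "module.independent (fscale::'a\<Rightarrow>_) B" and fin: "finite B"
  shows "module.independent (fscale::('e::linorder,'a) psi_field \<Rightarrow> _) ((\<lambda>w x. const_psi (w x)) ` B)"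
proof
  let ?cv = "(\<lambda>w x. const_psi (w x)) :: ('x \<Rightarrow> 'a) \<Rightarrow> ('x \<Rightarrow> ('e,'a) psi_field)"
  interpret A: vector_space "fscale :: 'a \<Rightarrow> ('x \<Rightarrow> 'a) \<Rightarrow> _" by (rule vs_fscale)
  interpret K: vector_space "fscale :: ('e,'a) psi_field \<Rightarrow> ('x \<Rightarrow> ('e,'a) psi_field) \<Rightarrow> _" by (rule vs_fscale)
  interpret P: vector_space_pair "\<lambda>r (k::('e,'a) psi_field). const_psi r * k" "(*) :: 'a \<Rightarrow> 'a \<Rightarrow> 'a"
    unfolding vector_space_pair_def using vs_cscale vs_mult by blast
  have inj: "inj_on ?cv B" by (rule inj_on_subset[OF cv_inj]) simp
  assume dep: "K.dependent (?cv ` B)"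
  obtain u where u: "\<exists>v\<in>?cv ` B. u v \<noteq> 0" "(\<Sum>v\<in>?cv ` B. fscale (u v) v) = 0"
    using K.dependent_finite[OF finite_imageI[OF fin]] dep by auto
  from u(1) obtain w0 where w0: "w0 \<in> B" "u (?cv w0) \<noteq> 0" by blast
  have s0: "(\<Sum>w\<in>B. fscale (u (?cv w)) (?cv w)) = 0"
    using u(2) by (simp add: sum.reindex[OF inj])
  have "P.vs1.independent {u (?cv w0)}"
    using w0(2) P.vs1.dependent_single by blast
  then obtain g where g: "Vector_Spaces.linear (\<lambda>r (k::('e,'a) psi_field). const_psi r * k) (*) g" "g (u (?cv w0)) = 1"
    using P.linear_independent_extend[of "{u (?cv w0)}" "\<lambda>_. 1"] by auto
  interpret G: Vector_Spaces.linear "\<lambda>r (k::('e,'a) psi_field). const_psi r * k" "(*) :: 'a \<Rightarrow> 'a \<Rightarrow> 'a" g by (rule g(1))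
  have "(\<Sum>w\<in>B. fscale (g (u (?cv w))) w) = 0"
  proof
    fix x
    have "(\<Sum>w\<in>B. u (?cv w) * const_psi (w x)) = 0"
      using fun_cong[OF s0, of x] by (simp add: sum_fun_apply)
    then have "g (\<Sum>w\<in>B. const_psi (w x) * u (?cv w)) = 0"
      by (simp add: mult.commute G.zero)
    then have "(\<Sum>w\<in>B. w x * g (u (?cv w))) = 0"
      by (simp add: G.sum G.scale)
    then show "(\<Sum>w\<in>B. fscale (g (u (?cv w))) w) x = 0 x"
      by (simp add: sum_fun_apply mult.commute)
  qed
  then have "g (u (?cv w0)) = 0"
    using A.independentD[OF indep fin order_refl, of "\<lambda>w. g (u (?cv w))" w0] w0(1) by simp
  with g(2) show False by simp
qed


lemma supp_span:
  fixes P :: "'x set"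
  assumes "finite P"
  shows "{w::'x\<Rightarrow>'k::field. \<forall>x. x \<notin> P \<longrightarrow> w x = 0}
     \<subseteq> module.span (fscale::'k \<Rightarrow> _) ((\<lambda>p x. if x = p then 1 else 0) ` P)"
proof
  interpret A: vector_space "fscale :: 'k \<Rightarrow> ('x \<Rightarrow> 'k) \<Rightarrow> _" by (rule vs_fscale)
  fix w :: "'x \<Rightarrow> 'k" assume w: "w \<in> {w. \<forall>x. x \<notin> P \<longrightarrow> w x = 0}"
  have "w = (\<Sum>p\<in>P. fscale (w p) (\<lambda>x. if x = p then 1 else 0))"
  proof
    fix x
    show "w x = (\<Sum>p\<in>P. fscale (w p) (\<lambda>x. if x = p then 1 else 0)) x"
      using w assms by (auto simp: sum_fun_apply if_distrib cong: if_cong)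
  qed
  also have "\<dots> \<in> A.span ((\<lambda>p x. if x = p then 1 else 0) ` P)"
    by (intro A.span_sum A.span_scale A.span_base) auto
  finally show "w \<in> A.span ((\<lambda>p x. if x = p then 1 else 0) ` P)" .
qed

lemma FE_sub: "FE E nE \<subseteq> {w. \<forall>x. x \<notin> Sigma E (\<lambda>e. {..<nE e}) \<longrightarrow> w x = 0}"
  by (auto simp: FE_def)

lemma FV_sub: "FV V nV \<subseteq> {w. \<forall>x. x \<notin> Sigma V (\<lambda>v. {..<nV v}) \<longrightarrow> w x = 0}"
  by (auto simp: FV_def)

lemma dmap_add: "dmap E endp nV nE R (w1 + w2) = dmap E endp nV nE R w1 + dmap E endp nV nE R w2"
  by (auto simp: fun_eq_iff dmap_def distrib_left sum.distrib)

lemma dmap_scale: "dmap E endp nV nE R (fscale c w) = fscale c (dmap E endp nV nE R w)"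
  by (auto simp: fun_eq_iff dmap_def sum_distrib_left mult.left_commute)

lemma dmap_ecomp:
  assumes "finite E" "e \<in> E"
  shows "dmap E endp nV nE R (ecomp e w) (v, i) =
     (if i < nV v \<and> endp e = v then (\<Sum>j<nE e. R e i j * w (e, j)) else 0)"
proof -
  have "\<And>e'. (\<Sum>j<nE e'. R e' i j * ecomp e w (e', j)) = (if e' = e then (\<Sum>j<nE e. R e i j * w (e, j)) else 0)"
    by (auto simp: ecomp_def)
  then show ?thesis using assms by (simp add: dmap_def)
qed

lemma dmap_cv:
  fixes R :: "'e::linorder \<Rightarrow> nat \<Rightarrow> nat \<Rightarrow> 'a::field" and s :: "'e \<Rightarrow> ('e,'a) psi_field" and endp :: "'e \<Rightarrow> 'v"
  assumes "finite E"
  shows "dmap E endp nV nE (\<lambda>e i j. s e * const_psi (R e i j)) (\<lambda>x. const_psi (w x))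
    = (\<Sum>e\<in>E. fscale (s e) (\<lambda>x. const_psi (dmap E endp nV nE R (ecomp e w) x)))"
proof
  fix x :: "'v \<times> nat"
  obtain v i where x: "x = (v, i)" by force
  show "dmap E endp nV nE (\<lambda>e i j. s e * const_psi (R e i j)) (\<lambda>x. const_psi (w x)) x
    = (\<Sum>e\<in>E. fscale (s e) (\<lambda>x. const_psi (dmap E endp nV nE R (ecomp e w) x))) x"
  proof -
    have "(\<Sum>e\<in>E. fscale (s e) (\<lambda>x. const_psi (dmap E endp nV nE R (ecomp e w) x))) (v, i)
      = (\<Sum>e\<in>E. s e * const_psi (if i < nV v \<and> endp e = v then (\<Sum>j<nE e. R e i j * w (e, j)) else 0))"
      using assms by (simp add: sum_fun_apply dmap_ecomp)
    also have "\<dots> = dmap E endp nV nE (\<lambda>e i j. s e * const_psi (R e i j)) (\<lambda>x. const_psi (w x)) (v, i)"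
      using assms by (simp add: dmap_def const_psi_sum const_psi_mult
        sum_distrib_left mult.assoc sum.inter_filter if_distrib cong: if_cong)
    finally show ?thesis unfolding x by simp
  qed
qed


lemma excess_bound:
  fixes V :: "'v set" and E :: "'e::linorder set" and tailG headG :: "'e \<Rightarrow> 'v"
    and nV :: "'v \<Rightarrow> nat" and nE :: "'e \<Rightarrow> nat"
    and RT RH :: "'e \<Rightarrow> nat \<Rightarrow> nat \<Rightarrow> 'a::field"
    and U :: "('v \<times> nat \<Rightarrow> 'a) set"
  assumes finV: "finite V" and finE: "finite E"
    and U: "module.subspace (fscale :: 'a \<Rightarrow> _) U" "U \<subseteq> FV V nV"
  shows "vector_space.dim (fscale :: 'a \<Rightarrow> _) (Gamma_ht V E tailG headG nV nE RT RH U)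
     \<le> h1_twist V E tailG headG nV nE RT RH + vector_space.dim (fscale :: 'a \<Rightarrow> _) U"
proof -
  interpret A: vector_space "fscale :: 'a \<Rightarrow> ('e \<times> nat \<Rightarrow> 'a) \<Rightarrow> _" by (rule vs_fscale)
  interpret AV: vector_space "fscale :: 'a \<Rightarrow> ('v \<times> nat \<Rightarrow> 'a) \<Rightarrow> _" by (rule vs_fscale)
  interpret K: vector_space "fscale :: ('e,'a) psi_field \<Rightarrow> ('e \<times> nat \<Rightarrow> ('e,'a) psi_field) \<Rightarrow> _" by (rule vs_fscale)
  interpret KV: vector_space "fscale :: ('e,'a) psi_field \<Rightarrow> ('v \<times> nat \<Rightarrow> ('e,'a) psi_field) \<Rightarrow> _" by (rule vs_fscale)
  interpret KP: vector_space_pair "fscale :: ('e,'a) psi_field \<Rightarrow> ('e \<times> nat \<Rightarrow> ('e,'a) psi_field) \<Rightarrow> _"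
     "fscale :: ('e,'a) psi_field \<Rightarrow> ('v \<times> nat \<Rightarrow> ('e,'a) psi_field) \<Rightarrow> _" ..
  define RTK where "RTK = (\<lambda>e i j. psi e * const_psi (RT e i j) :: ('e,'a) psi_field)"
  define RHK where "RHK = (\<lambda>e i j. const_psi (RH e i j) :: ('e,'a) psi_field)"
  define D where "D = (\<lambda>w. dmap E headG nV nE RHK w - dmap E tailG nV nE RTK w)"
  define \<Gamma> where "\<Gamma> = Gamma_ht V E tailG headG nV nE RT RH U"
  define H where "H = H1 V E tailG headG nV nE RTK RHK"
  have h1: "h1_twist V E tailG headG nV nE RT RH = K.dim H"
    unfolding h1_twist_def H_def RTK_def RHK_def ..
  have H: "H = {w \<in> FE E nE. D w = 0}" unfolding H_def H1_def D_def ..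
  define PE where "PE = Sigma E (\<lambda>e. {..<nE e})"
  define PV where "PV = Sigma V (\<lambda>v. {..<nV v})"
  have finPE: "finite PE" unfolding PE_def using finE by auto
  have finPV: "finite PV" unfolding PV_def using finV by auto
  have FEa: "FE E nE \<subseteq> A.span ((\<lambda>p x. if x = p then 1 else 0) ` PE)"
    using FE_sub[of E nE] supp_span[OF finPE] unfolding PE_def by blast
  have FEk: "FE E nE \<subseteq> K.span ((\<lambda>p x. if x = p then 1 else 0) ` PE)"
    using FE_sub[of E nE] supp_span[OF finPE] unfolding PE_def by blast
  have FVa: "FV V nV \<subseteq> AV.span ((\<lambda>p x. if x = p then 1 else 0) ` PV)"
    using FV_sub[of V nV] supp_span[OF finPV] unfolding PV_def by blast
  have \<Gamma>FE: "\<Gamma> \<subseteq> FE E nE" unfolding \<Gamma>_def Gamma_ht_def by auto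
  obtain B where B: "B \<subseteq> \<Gamma>" "A.independent B" "\<Gamma> \<subseteq> A.span B" "card B = A.dim \<Gamma>"
    using A.basis_exists by blast
  have finB: "finite B"
    using A.independent_span_bound[OF finite_imageI[OF finPE] B(2)] B(1) \<Gamma>FE FEa by blast
  obtain C where C: "C \<subseteq> U" "AV.independent C" "U \<subseteq> AV.span C" "card C = AV.dim U"
    using AV.basis_exists by blast
  have finC: "finite C"
    using AV.independent_span_bound[OF finite_imageI[OF finPV] C(2)] C(1) U(2) FVa by blast
  define cvE where "cvE = (\<lambda>(w::'e\<times>nat\<Rightarrow>'a) x. const_psi (w x) :: ('e,'a) psi_field)"
  define cvV where "cvV = (\<lambda>(w::'v\<times>nat\<Rightarrow>'a) x. const_psi (w x) :: ('e,'a) psi_field)"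
  define Y where "Y = KV.span (cvV ` C)"
  have cvU: "cvV u \<in> Y" if "u \<in> U" for u
  proof -
    from that C(3) AV.span_finite[OF finC] obtain a where a: "u = (\<Sum>c\<in>C. fscale (a c) c)" by auto
    have "cvV u = (\<Sum>c\<in>C. fscale (const_psi (a c)) (cvV c))"
      unfolding a cvV_def by (auto simp: fun_eq_iff sum_fun_apply const_psi_sum const_psi_mult)
    also have "\<dots> \<in> Y" unfolding Y_def
      by (intro KV.span_sum KV.span_scale KV.span_base) auto
    finally show ?thesis .
  qed
  have indep: "K.independent (cvE ` B)" unfolding cvE_def by (rule indep_cv[OF B(2) finB])
  have injE: "inj cvE" unfolding cvE_def by (rule cv_inj)
  have cardcvB: "card (cvE ` B) = card B" using injE by (simp add: card_image inj_on_subset)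
  define W where "W = K.span (cvE ` B)"
  have dimW: "K.dim W = card B" unfolding W_def using K.dim_span_eq_card_independent[OF indep] cardcvB by simp
  have linD: "Vector_Spaces.linear fscale fscale D"
    unfolding linear_iff D_def
    by (auto simp: vs_fscale dmap_add dmap_scale KV.scale_right_diff_distrib)
  have DcvB: "D (cvE b) \<in> Y" if "b \<in> B" for b
  proof -
    have bG: "\<forall>e\<in>E. dmap E headG nV nE RH (ecomp e b) \<in> U \<and> dmap E tailG nV nE RT (ecomp e b) \<in> U"
      using that B(1) unfolding \<Gamma>_def Gamma_ht_def by auto
    have h: "dmap E headG nV nE RHK (cvE b) = (\<Sum>e\<in>E. fscale 1 (cvV (dmap E headG nV nE RH (ecomp e b))))"
      using dmap_cv[OF finE, of headG nV nE "\<lambda>_. 1" RH b] unfolding RHK_def cvE_def cvV_def by simp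
    have t: "dmap E tailG nV nE RTK (cvE b) = (\<Sum>e\<in>E. fscale (psi e) (cvV (dmap E tailG nV nE RT (ecomp e b))))"
      using dmap_cv[OF finE, of tailG nV nE psi RT b] unfolding RTK_def cvE_def cvV_def by simp
    show ?thesis unfolding D_def h t Y_def
      using bG cvU unfolding Y_def
      by (intro KV.span_diff KV.span_sum KV.span_scale) auto
  qed
  have DW: "D x \<in> Y" if "x \<in> W" for x
  proof -
    have "W \<subseteq> D -` Y" unfolding W_def
      by (rule K.span_minimal) (use DcvB KP.linear_subspace_vimage[OF linD] in \<open>auto simp: Y_def\<close>)
    then show ?thesis using that by auto
  qed
  have FEsub: "K.subspace (FE E nE)"
    by (rule K.subspaceI) (auto simp: FE_def)
  have WFE: "W \<subseteq> FE E nE" unfolding W_def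
    by (rule K.span_minimal[OF _ FEsub]) (use B(1) \<Gamma>FE in \<open>auto simp: cvE_def FE_def\<close>)
  obtain BH where BH: "BH \<subseteq> H" "K.independent BH" "H \<subseteq> K.span BH" "card BH = K.dim H"
    using K.basis_exists by blast
  have finBH: "finite BH"
    using K.independent_span_bound[OF finite_imageI[OF finPE] BH(2)] BH(1) H FEk by blast
  define N where "N = {x\<in>W. D x = 0}"
  obtain N0 where N0: "N0 \<subseteq> N" "K.independent N0" "N \<subseteq> K.span N0"
    using K.maximal_independent_subset by blast
  have "N0 \<subseteq> W" using N0(1) N_def by auto
  then obtain B' where B': "N0 \<subseteq> B'" "B' \<subseteq> W" "K.independent B'" "W \<subseteq> K.span B'"
    using K.maximal_independent_subset_extend[OF _ N0(2)] by blast
  have finB': "finite B'"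
    using K.independent_span_bound[OF finite_imageI[OF finB] B'(3)] B'(2) W_def by blast
  have cardB': "card B' = card B"
    using K.basis_card_eq_dim[OF B'(2) B'(4) B'(3)] dimW by simp
  have cardN0: "card N0 \<le> card BH"
  proof -
    have "N0 \<subseteq> K.span BH" using N0(1) BH(3) WFE H N_def by auto
    then show ?thesis using K.independent_span_bound[OF finBH N0(2)] by blast
  qed
  define R where "R = B' - N0"
  have finR: "finite R" "finite N0" using finB' B'(1) R_def by (auto intro: finite_subset)
  have key: "x = 0" if x: "x \<in> K.span R" "D x = 0" for x
  proof -
    have "K.span R \<subseteq> W" unfolding W_def
      by (rule K.span_minimal) (use B'(2) R_def W_def in auto)
    then have "x \<in> N" using x N_def by auto
    then have xN0: "x \<in> K.span N0" using N0(3) by auto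
    obtain a where a: "x = (\<Sum>r\<in>R. fscale (a r) r)" using x(1) K.span_finite[OF finR(1)] by auto
    obtain b where b: "x = (\<Sum>r\<in>N0. fscale (b r) r)" using xN0 K.span_finite[OF finR(2)] by auto
    define u where "u = (\<lambda>v. if v \<in> R then a v else - b v)"
    have BRN: "B' = R \<union> N0" "R \<inter> N0 = {}" using B'(1) R_def by auto
    have "(\<Sum>v\<in>B'. fscale (u v) v) = (\<Sum>v\<in>R. fscale (u v) v) + (\<Sum>v\<in>N0. fscale (u v) v)"
      unfolding BRN(1) by (rule sum.union_disjoint[OF finR BRN(2)])
    also have "(\<Sum>v\<in>R. fscale (u v) v) = x" unfolding a u_def by simp
    also have "(\<Sum>v\<in>N0. fscale (u v) v) = - x" unfolding b u_def using BRN(2)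
      by (auto simp: sum_negf[symmetric] intro!: sum.cong)
    finally have "(\<Sum>v\<in>B'. fscale (u v) v) = 0" by (simp only: add.right_inverse)
    then have "\<forall>v\<in>B'. u v = 0" using K.independentD[OF B'(3) finB' order_refl] by blast
    then have "\<forall>r\<in>R. a r = 0" unfolding u_def R_def by auto
    then show "x = 0" unfolding a by simp
  qed
  have injD: "inj_on D R"
  proof (rule inj_onI)
    fix r1 r2 assume r: "r1 \<in> R" "r2 \<in> R" "D r1 = D r2"
    have "D (r1 - r2) = 0" using r KP.linear_diff[OF linD] by simp
    moreover have "r1 - r2 \<in> K.span R" using r by (intro K.span_diff K.span_base)
    ultimately have "r1 - r2 = 0" using key by blast
    then show "r1 = r2" by (simp only: right_minus_eq)
  qed
  have indR: "K.independent R" using B'(3) R_def K.independent_mono by blast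
  have indDR: "KV.independent (D ` R)"
  proof
    assume "KV.dependent (D ` R)"
    then obtain u where u: "\<exists>v\<in>D ` R. u v \<noteq> 0" "(\<Sum>v\<in>D ` R. fscale (u v) v) = 0"
      using KV.dependent_finite[OF finite_imageI[OF finR(1)]] by auto
    have "D (\<Sum>r\<in>R. fscale (u (D r)) r) = (\<Sum>r\<in>R. fscale (u (D r)) (D r))"
      by (simp add: KP.linear_sum[OF linD] KP.linear_scale[OF linD])
    also have "\<dots> = 0" using u(2) by (simp add: sum.reindex[OF injD])
    finally have "(\<Sum>r\<in>R. fscale (u (D r)) r) = 0"
      using key by (meson K.span_base K.span_scale K.span_sum)
    then have "\<forall>r\<in>R. u (D r) = 0" using K.independentD[OF indR finR(1) order_refl, of "\<lambda>r. u (D r)"] by blast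
    then show False using u(1) by auto
  qed
  have cardR: "card R \<le> card C"
  proof -
    have "D ` R \<subseteq> Y" using DW B'(2) R_def by auto
    then have "card (D ` R) \<le> card (cvV ` C)"
      using KV.independent_span_bound[OF finite_imageI[OF finC] indDR] unfolding Y_def by blast
    also have "\<dots> \<le> card C" by (rule card_image_le[OF finC])
    finally show ?thesis using card_image[OF injD] by simp
  qed
  have "card B' = card N0 + card R"
    using card_Un_disjoint[OF finR(2) finR(1)] B'(1) R_def by (metis Diff_disjoint Diff_partition)
  then show ?thesis
    using cardB' cardN0 cardR B(4) C(4) BH(4) h1 unfolding \<Gamma>_def by linarith
qed


theorem lemma1:
  fixes V :: "'v set" and E :: "'e::linorder set" and tailG headG :: "'e \<Rightarrow> 'v"
    and nV :: "'v \<Rightarrow> nat" and nE :: "'e \<Rightarrow> nat"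
    and RT RH :: "'e \<Rightarrow> nat \<Rightarrow> nat \<Rightarrow> 'a::field"
  assumes "finite V" and "finite E"
    and "\<forall>e\<in>E. tailG e \<in> V \<and> headG e \<in> V"
  shows "int (h1_twist V E tailG headG nV nE RT RH) \<ge> max_excess V E tailG headG nV nE RT RH"
proof -
  interpret AV: vector_space "fscale :: 'a \<Rightarrow> ('v \<times> nat \<Rightarrow> 'a) \<Rightarrow> _" by (rule vs_fscale)
  define PV where "PV = Sigma V (\<lambda>v. {..<nV v})"
  have finPV: "finite PV" unfolding PV_def using assms(1) by auto
  have FVa: "FV V nV \<subseteq> AV.span ((\<lambda>p x. if x = p then 1 else 0) ` PV)"
    using FV_sub[of V nV] supp_span[OF finPV] unfolding PV_def by blast
  define h where "h = h1_twist V E tailG headG nV nE RT RH"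
  define S where "S = {excess V E tailG headG nV nE RT RH U | U.
            module.subspace (fscale :: 'a \<Rightarrow> _) U \<and> U \<subseteq> FV V nV}"
  have bnd: "- int (card ((\<lambda>p x. if x = p then 1 else 0) ` PV :: ('v \<times> nat \<Rightarrow> 'a) set)) \<le> s \<and> s \<le> int h"
    if "s \<in> S" for s
  proof -
    from that obtain U where U: "AV.subspace U" "U \<subseteq> FV V nV"
      and s: "s = excess V E tailG headG nV nE RT RH U" unfolding S_def by blast
    have "AV.dim U \<le> card ((\<lambda>p x. if x = p then 1 else 0) ` PV :: ('v \<times> nat \<Rightarrow> 'a) set)"
      using AV.dim_le_card[OF _ finite_imageI[OF finPV]] U(2) FVa by blast
    moreover have "vector_space.dim (fscale :: 'a \<Rightarrow> _) (Gamma_ht V E tailG headG nV nE RT RH U) \<le> h + AV.dim U"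
      using excess_bound[OF assms(1,2) U] unfolding h_def .
    ultimately show ?thesis unfolding s excess_def by linarith
  qed
  have fin: "finite S"
    by (rule finite_subset[of _ "{- int (card ((\<lambda>p x. if x = p then 1 else 0) ` PV :: ('v \<times> nat \<Rightarrow> 'a) set)) .. int h}"])
      (use bnd in auto)
  have ne: "S \<noteq> {}"
  proof -
    have "AV.subspace {0}" by simp
    moreover have "{0} \<subseteq> FV V nV" by (auto simp: FV_def)
    ultimately show ?thesis unfolding S_def by blast
  qed
  have "Max S \<le> int h" using fin ne bnd by (simp add: Max_le_iff)
  then show ?thesis unfolding max_excess_def S_def h_def .
qed

end
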